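(* Let $q^{**}(g)=\max\{q(R): K(g;R)\le1\}$. Then the width of the Finsleroid is $$2q^{**}(g)=2\,e^{-\frac12G\Phi^{**}},$$ where $\Phi^{**}=\Phi(g;R)$ evaluated at any $R$ with $q(R)>0$ and $Z=-g\,q(R)$ (this value does not depend on the choice of such $R$); moreover the maximum is attained at points with $Z=-g\,q$.
   Context: Let $N\ge2$, $V_N=\mathbb{R}^N$ with points $R=(R^1,\dots,R^N)$, $Z=R^N$; indices $a,b$ run over $1,\dots,N-1$, repeated indices summed. Fix a symmetric positive-definite matrix $(r_{ab})$, $q(R)=\sqrt{r_{ab}R^aR^b}$. Fix $g\in(-2,2)$, $h=\sqrt{1-g^2/4}$, $G=g/h$. Define $B(g;R)=Z^2+gqZ+q^2$, $A(g;R)=Z+\frac12gq$, $\Phi(g;R)=\arctan(A/(hq))$ for $q>0$ ($\Phi=\pm\pi/2$ if $q=0$, $Z\gtrless0$), $J=e^{\frac12G\Phi}$, and the Finsleroid metric function $K(g;R)=\sqrt{B}\,J$ ($K(g;0)=0$). The Finsleroid is $\{R:K(g;R)\le1\}$. *)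

theory Defs
  imports "HOL-Analysis.Analysis"
begin

text \<open>A point R of V_N = R^N is represented as a pair (y, Z) with
  y = (R^1,...,R^(N-1)) :: real^'m  (so N - 1 = CARD('m) \<ge> 1) and Z = R^N.\<close>

definition qf :: "real^'m^'m \<Rightarrow> real^'m \<Rightarrow> real" where
  "qf r y = sqrt (y \<bullet> (r *v y))"

definition hh :: "real \<Rightarrow> real" where
  "hh g = sqrt (1 - g^2 / 4)"

definition GG :: "real \<Rightarrow> real" where
  "GG g = g / hh g"

definition Bf :: "real^'m^'m \<Rightarrow> real \<Rightarrow> real^'m \<Rightarrow> real \<Rightarrow> real" where
  "Bf r g y z = z^2 + g * qf r y * z + (qf r y)^2"

definition Af :: "real^'m^'m \<Rightarrow> real \<Rightarrow> real^'m \<Rightarrow> real \<Rightarrow> real" where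
  "Af r g y z = z + g * qf r y / 2"

definition Phi :: "real^'m^'m \<Rightarrow> real \<Rightarrow> real^'m \<Rightarrow> real \<Rightarrow> real" where
  "Phi r g y z =
     (if qf r y > 0 then arctan (Af r g y z / (hh g * qf r y))
      else if z > 0 then pi / 2 else - (pi / 2))"

definition Jf :: "real^'m^'m \<Rightarrow> real \<Rightarrow> real^'m \<Rightarrow> real \<Rightarrow> real" where
  "Jf r g y z = exp (GG g * Phi r g y z / 2)"

definition Kf :: "real^'m^'m \<Rightarrow> real \<Rightarrow> real^'m \<Rightarrow> real \<Rightarrow> real" where
  "Kf r g y z = (if y = 0 \<and> z = 0 then 0 else sqrt (Bf r g y z) * Jf r g y z)"

definition finsleroid :: "real^'m^'m \<Rightarrow> real \<Rightarrow> ((real^'m) \<times> real) set" where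
  "finsleroid r g = {(y, z). Kf r g y z \<le> 1}"

end

theory Submission
  imports Defs
begin

definition FF :: "real \<Rightarrow> real \<Rightarrow> real" where
  "FF G s = ln (1 + s^2) / 2 + G / 2 * arctan s"

lemma aux: "(d::real) \<noteq> 0 \<Longrightarrow> (2 * s / d) / 2 + G / 2 * inverse d = (s + G / 2) / d"
  by (simp add: field_simps)

lemma FF_deriv: "DERIV (FF G) s :> (s + G/2) / (1 + s^2)"
proof -
  have p: "1 + s^2 > 0" by (simp add: add_pos_nonneg)
  have "DERIV (FF G) s :> (2 * s / (1 + s^2)) / 2 + G/2 * inverse (1 + s^2)"
    unfolding FF_def
    using p by (auto intro!: derivative_eq_intros DERIV_arctan simp: power2_eq_square field_simps)
  moreover have "(2 * s / (1 + s^2)) / 2 + G/2 * inverse (1 + s^2) = (s + G/2) / (1 + s^2)"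
    using aux[of "1 + s^2" s G] p by simp
  ultimately show ?thesis by simp
qed

lemma FF_strict:
  assumes "s \<noteq> - G/2" shows "FF G s > FF G (- G/2)"
proof (cases "s > - G/2")
  case True
  from MVT2[OF True FF_deriv] obtain x where x: "- G/2 < x" "x < s"
    "FF G s - FF G (-G/2) = (s - - G/2) * ((x + G/2) / (1 + x^2))" by blast
  have "(s - - G/2) * ((x + G/2) / (1 + x^2)) > 0"
    using x True by (intro mult_pos_pos divide_pos_pos) (auto intro: add_pos_nonneg)
  then show ?thesis using x by linarith
next
  case False
  then have F: "s < - G/2" using assms by linarith
  from MVT2[OF F FF_deriv] obtain x where x: "s < x" "x < - G/2"
    "FF G (-G/2) - FF G s = (- G/2 - s) * ((x + G/2) / (1 + x^2))" by blast
  have "(x + G/2) / (1 + x^2) < 0"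
    using x by (intro divide_neg_pos) (auto intro: add_pos_nonneg)
  then have "(- G/2 - s) * ((x + G/2) / (1 + x^2)) < 0"
    using F by (intro mult_pos_neg) auto
  then show ?thesis using x by linarith
qed

lemma qf_nonneg_arg:
  assumes "\<And>y. y \<noteq> 0 \<Longrightarrow> y \<bullet> (r *v y) > 0"
  shows "y \<bullet> (r *v y) \<ge> 0"
  using assms[of y] by (cases "y = 0") auto

lemma qf_pos:
  assumes "\<And>y. y \<noteq> 0 \<Longrightarrow> y \<bullet> (r *v y) > 0"
  shows "qf r y > 0 \<longleftrightarrow> y \<noteq> 0"
  using assms[of y] by (auto simp: qf_def)

lemma qf_scale: "qf r (c *\<^sub>R y) = \<bar>c\<bar> * qf r y"
proof -
  have "(c *\<^sub>R y) \<bullet> (r *v (c *\<^sub>R y)) = c^2 * (y \<bullet> (r *v y))"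
    by (simp add: matrix_vector_mult_scaleR power2_eq_square)
  then show ?thesis by (simp add: qf_def real_sqrt_mult)
qed

lemma hh_pos: "-2 < g \<Longrightarrow> g < 2 \<Longrightarrow> hh g > 0"
proof -
  assume "-2 < g" "g < 2"
  then have "g^2 < 4" proof -
    have "(g - 2) * (g + 2) < 0" using \<open>-2 < g\<close> \<open>g < 2\<close> by (intro mult_neg_pos) auto
    then show ?thesis by (simp add: power2_eq_square algebra_simps)
  qed
  then show ?thesis by (simp add: hh_def)
qed

lemma hh_sq: "-2 < g \<Longrightarrow> g < 2 \<Longrightarrow> (hh g)^2 = 1 - g^2/4"
proof -
  assume "-2 < g" "g < 2"
  then have "g^2 < 4" proof -
    have "(g - 2) * (g + 2) < 0" using \<open>-2 < g\<close> \<open>g < 2\<close> by (intro mult_neg_pos) auto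
    then show ?thesis by (simp add: power2_eq_square algebra_simps)
  qed
  then show ?thesis by (simp add: hh_def)
qed

lemma K_repr:
  assumes g: "-2 < g" "g < 2" and q: "qf r y > 0"
  shows "Kf r g y z = qf r y * hh g * exp (FF (GG g) (Af r g y z / (hh g * qf r y)))"
proof -
  define h where "h = hh g"
  define qq where "qq = qf r y"
  define s where "s = Af r g y z / (h * qq)"
  have h: "h > 0" using hh_pos[OF g] h_def by simp
  have h2: "h^2 = 1 - g^2/4" using hh_sq[OF g] h_def by simp
  have yne: "y \<noteq> 0" using q by (auto simp: qf_def)
  have A: "Af r g y z = h * qq * s" using h q by (simp add: s_def qq_def)
  have B: "Bf r g y z = (h * qq)^2 * (1 + s^2)"
  proof -
    have "Bf r g y z = (Af r g y z)^2 + qq^2 * (1 - g^2/4)"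
      by (simp add: Bf_def Af_def qq_def power2_eq_square field_simps)
    then have "Bf r g y z = (Af r g y z)^2 + qq^2 * h^2" by (simp only: h2)
    then show ?thesis by (simp add: A power2_eq_square algebra_simps)
  qed
  have p: "1 + s^2 > 0" by (simp add: add_pos_nonneg)
  have sq: "sqrt (1 + s^2) = exp (ln (1 + s^2) / 2)"
    using p by (simp add: powr_half_sqrt[symmetric] powr_def)
  have "sqrt (Bf r g y z) = h * qq * exp (ln (1 + s^2) / 2)"
    using h q B by (simp add: real_sqrt_mult sq qq_def)
  moreover have "Jf r g y z = exp (GG g / 2 * arctan s)"
    using q by (simp add: Jf_def Phi_def s_def h_def qq_def)
  ultimately have "Kf r g y z = h * qq * (exp (ln (1 + s^2) / 2) * exp (GG g / 2 * arctan s))"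
    using yne by (simp add: Kf_def)
  also have "\<dots> = h * qq * exp (FF (GG g) s)"
    by (simp add: FF_def exp_add[symmetric])
  finally show ?thesis by (simp add: h_def qq_def s_def)
qed

lemma s_star:
  assumes g: "-2 < g" "g < 2" and q: "qf r y > 0" and z: "z = - g * qf r y"
  shows "Af r g y z / (hh g * qf r y) = - GG g / 2"
  using hh_pos[OF g] q z by (simp add: Af_def GG_def field_simps)

lemma s_star_inv:
  assumes g: "-2 < g" "g < 2" and q: "qf r y > 0"
    and s: "Af r g y z / (hh g * qf r y) = - GG g / 2"
  shows "z = - g * qf r y"
proof -
  have hp: "hh g > 0" using hh_pos[OF g] .
  have "Af r g y z = - GG g / 2 * (hh g * qf r y)"
    using s hp q by (simp add: divide_eq_eq)
  also have "\<dots> = - g * qf r y / 2" using hp by (simp add: GG_def)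
  finally show ?thesis by (simp add: Af_def)
qed

lemma m_val:
  assumes g: "-2 < g" "g < 2"
  shows "1 / (hh g * exp (FF (GG g) (- GG g / 2))) = exp (- GG g * arctan (- GG g / 2) / 2)"
proof -
  define h where "h = hh g"
  have h: "h > 0" using hh_pos[OF g] h_def by simp
  have h2: "h^2 = 1 - g^2/4" using hh_sq[OF g] h_def by simp
  have "1 + (GG g / 2)^2 = 1 / h^2"
    using h h2 by (simp add: GG_def h_def[symmetric] field_simps power2_eq_square)
  then have "exp (ln (1 + (- GG g / 2)^2) / 2) = 1 / h"
    using h by (simp add: ln_div ln_realpow exp_minus inverse_eq_divide)
  then have "hh g * exp (FF (GG g) (- GG g / 2)) = exp (GG g / 2 * arctan (- GG g / 2))"
    using h by (simp add: FF_def exp_add h_def)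
  then show ?thesis by (simp add: exp_minus[symmetric] inverse_eq_divide[symmetric])
qed
theorem theorem2p9:
  fixes r :: "real^'m^'m" and g :: real
  assumes g_range: "-2 < g" "g < 2"
    and r_sym: "transpose r = r"
    and r_posdef: "\<And>y. y \<noteq> 0 \<Longrightarrow> y \<bullet> (r *v y) > 0"
  shows "(\<forall>y z y' z'. qf r y > 0 \<and> z = - g * qf r y \<and> qf r y' > 0 \<and> z' = - g * qf r y'
            \<longrightarrow> Phi r g y z = Phi r g y' z')
       \<and> (\<exists>p\<in>finsleroid r g. \<forall>p'\<in>finsleroid r g. qf r (fst p') \<le> qf r (fst p))
       \<and> (\<forall>y z. qf r y > 0 \<and> z = - g * qf r y \<longrightarrow>
            2 * (SUP p\<in>finsleroid r g. qf r (fst p)) = 2 * exp (- GG g * Phi r g y z / 2))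
       \<and> (\<forall>p\<in>finsleroid r g. (\<forall>p'\<in>finsleroid r g. qf r (fst p') \<le> qf r (fst p))
            \<longrightarrow> snd p = - g * qf r (fst p))"
proof -
  define G where "G = GG g"
  define h where "h = hh g"
  define m where "m = h * exp (FF G (- G / 2))"
  have h: "h > 0" using hh_pos[OF g_range] h_def by simp
  have m: "m > 0" using h by (simp add: m_def)
  have phistar: "Phi r g y z = arctan (- G / 2)" if "qf r y > 0" "z = - g * qf r y" for y z
    using that s_star[OF g_range that] by (simp add: Phi_def G_def)
  have KL: "Kf r g y z \<ge> qf r y * m" if "qf r y > 0" for y z
  proof -
    have "FF G (Af r g y z / (h * qf r y)) \<ge> FF G (- G / 2)"
      using FF_strict[of "Af r g y z / (h * qf r y)" G] by (cases "Af r g y z / (h * qf r y) = - G / 2") auto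
    then show ?thesis using K_repr[OF g_range that, of z] h that
      by (simp add: m_def G_def h_def mult_left_mono)
  qed
  have KE: "z = - g * qf r y" if "qf r y > 0" "Kf r g y z \<le> qf r y * m" for y z
  proof (rule s_star_inv[OF g_range that(1)], rule ccontr)
    assume ne: "Af r g y z / (hh g * qf r y) \<noteq> - GG g / 2"
    have "FF G (Af r g y z / (h * qf r y)) > FF G (- G / 2)"
      using FF_strict ne by (simp add: G_def h_def)
    then have "Kf r g y z > qf r y * m" using K_repr[OF g_range that(1), of z] h that(1)
      by (simp add: m_def G_def h_def)
    then show False using that(2) by simp
  qed
  have q0: "qf r 0 = 0" by (simp add: qf_def)
  have bound: "qf r (fst p) \<le> 1 / m" if "p \<in> finsleroid r g" for p
  proof (cases "qf r (fst p) > 0")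
    case True
    have "qf r (fst p) * m \<le> 1" using KL[OF True, of "snd p"] that
      by (cases p) (simp add: finsleroid_def)
    then show ?thesis using m by (simp add: field_simps)
  next
    case False
    then show ?thesis using m qf_nonneg_arg[OF r_posdef, of "fst p"] by (simp add: qf_def)
  qed
  obtain i :: 'm where True by blast
  define y1 :: "real^'m" where "y1 = axis i 1"
  have y1: "qf r y1 > 0" using qf_pos[OF r_posdef] by (simp add: y1_def axis_eq_0_iff)
  define y0 where "y0 = (1 / (m * qf r y1)) *\<^sub>R y1"
  have qy0: "qf r y0 = 1 / m" using y1 m by (simp add: y0_def qf_scale)
  have y0p: "qf r y0 > 0" using qy0 m by simp
  define p0 where "p0 = (y0, - g * qf r y0)"
  have "Kf r g y0 (- g * qf r y0) = qf r y0 * m"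
    unfolding K_repr[OF g_range y0p] s_star[OF g_range y0p refl]
    by (simp add: m_def G_def h_def)
  then have "Kf r g y0 (- g * qf r y0) = 1" using qy0 m by simp
  then have p0: "p0 \<in> finsleroid r g" by (simp add: p0_def finsleroid_def)
  have max0: "\<forall>p'\<in>finsleroid r g. qf r (fst p') \<le> qf r (fst p0)"
    using bound qy0 by (simp add: p0_def)
  have sup: "(SUP p\<in>finsleroid r g. qf r (fst p)) = 1 / m"
  proof (rule cSup_eq_maximum)
    show "1 / m \<in> (\<lambda>p. qf r (fst p)) ` finsleroid r g"
      using p0 qy0 by (intro image_eqI[of _ _ p0]) (auto simp: p0_def)
  qed (use bound in auto)
  have mv: "1 / m = exp (- G * arctan (- G / 2) / 2)"
    using m_val[OF g_range] by (simp add: m_def G_def h_def)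
  show ?thesis
  proof (intro conjI allI impI ballI)
    fix y z y' z'
    assume "0 < qf r y \<and> z = - g * qf r y \<and> 0 < qf r y' \<and> z' = - g * qf r y'"
    then show "Phi r g y z = Phi r g y' z'" using phistar by auto
  next
    show "\<exists>p\<in>finsleroid r g. \<forall>p'\<in>finsleroid r g. qf r (fst p') \<le> qf r (fst p)"
      using p0 max0 by blast
  next
    fix y z assume "0 < qf r y \<and> z = - g * qf r y"
    then show "2 * (SUP p\<in>finsleroid r g. qf r (fst p)) = 2 * exp (- GG g * Phi r g y z / 2)"
      using phistar sup mv by (simp add: G_def)
  next
    fix p assume pf: "p \<in> finsleroid r g"
      and mx: "\<forall>p'\<in>finsleroid r g. qf r (fst p') \<le> qf r (fst p)"
    have ge: "qf r (fst p) \<ge> 1 / m" using mx p0 qy0 by (auto simp: p0_def)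
    then have pos: "qf r (fst p) > 0" using m by (smt (verit) divide_pos_pos)
    have "qf r (fst p) * m \<ge> 1" using ge m by (simp add: field_simps)
    moreover have "Kf r g (fst p) (snd p) \<le> 1" using pf by (cases p) (simp add: finsleroid_def)
    ultimately show "snd p = - g * qf r (fst p)" using KE[OF pos] by simp
  qed
qed

end
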